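(* Let $s$ be a positive integer, let $f:\mathbb{N}\to\mathbb{C}$ be an arithmetical function, and let $f'(k)=\sum_{d\mid k}\mu(d)f(k/d)$. Suppose $$\sum_{k=1}^{\infty}2^{\omega(k)}\frac{|f'(k)|}{k^s}<\infty .$$ For each $q\ge 1$ put $a_q=\sum_{m=1}^{\infty}\frac{f'(mq)}{(mq)^s}$. Then for every positive integer $n$ the series $\sum_{q=1}^{\infty}a_q\,c_q^{(s)}(n^s)$ converges absolutely (indeed $\sum_{q\ge1}\sum_{m\ge1}\frac{|f'(mq)|}{(mq)^s}|c_q^{(s)}(n^s)|<\infty$), and its sum equals $f(n)$.
   Context: For positive integers $a,b,s$, the generalized gcd $(a,b)_s$ is the largest $d^s$ ($d\in\mathbb{N}$) such that $d^s\mid a$ and $d^s\mid b$. The Cohen–Ramanujan sum is defined for positive integers $q,n,s$ by $$c_q^{(s)}(n)=\sum_{\substack{h=1\\ (h,q^s)_s=1}}^{q^s} e^{2\pi i n h/q^s}.$$ $\mu$ is the Möbius function and $\omega(k)$ is the number of distinct prime divisors of $k$. *)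

theory Defs
  imports "HOL-Analysis.Analysis" "HOL-Computational_Algebra.Squarefree"
begin

definition mu :: "nat \<Rightarrow> int" where
  "mu d = (if d = 0 then 0 else if squarefree d then (-1) ^ card (prime_factors d) else 0)"

definition omega :: "nat \<Rightarrow> nat" where
  "omega k = card (prime_factors k)"

definition gen_gcd :: "nat \<Rightarrow> nat \<Rightarrow> nat \<Rightarrow> nat" where
  "gen_gcd s a b = (GREATEST x. \<exists>d. x = d ^ s \<and> d ^ s dvd a \<and> d ^ s dvd b)"

definition cohen_ramanujan :: "nat \<Rightarrow> nat \<Rightarrow> nat \<Rightarrow> complex" where
  "cohen_ramanujan s q n =
     (\<Sum>h\<in>{h\<in>{1..q ^ s}. gen_gcd s h (q ^ s) = 1}.
        exp (2 * of_real pi * \<i> * of_nat n * of_nat h / of_nat (q ^ s)))"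

definition mu_conv :: "(nat \<Rightarrow> complex) \<Rightarrow> nat \<Rightarrow> complex" where
  "mu_conv f k = (\<Sum>d | d dvd k. of_int (mu d) * f (k div d))"

end

theory Submission
  imports Defs
begin

lemma mu_pos_sq: "d > 0 \<Longrightarrow> mu d = (if squarefree d then (-1) ^ card (prime_factors d) else 0)"
  by (simp add: mu_def)

lemma mu_mult_prime:
  assumes p: "prime p" and np: "\<not> p dvd e" and e: "e > 0"
  shows "mu (p * e) = - mu e"
proof -
  have cop: "coprime p e" using p np by (simp add: prime_imp_coprime)
  have sq: "squarefree (p * e) \<longleftrightarrow> squarefree e"
    using cop squarefree_mult_coprime squarefree_prime[OF p] squarefree_mono[of e "p*e"] by auto
  have pf: "prime_factors (p * e) = insert p (prime_factors e)"
    using p e by (simp add: prime_factors_product prime_prime_factors)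
  have "p \<notin> prime_factors e" using np by (auto simp: in_prime_factors_iff)
  then have "card (prime_factors (p*e)) = Suc (card (prime_factors e))"
    by (simp add: pf)
  then show ?thesis using p e sq by (auto simp: mu_def prime_gt_0_nat)
qed

lemma mu_mult_prime_dvd:
  assumes p: "prime p" and dp: "p dvd e"
  shows "mu (p * e) = 0"
proof -
  have "p^2 dvd p * e" using dp by (auto simp: power2_eq_square)
  then have "\<not> squarefree (p*e)" using p by (meson not_prime_unit not_squarefreeI)
  then show ?thesis by (simp add: mu_def)
qed

lemma mu_sum:
  fixes n :: nat
  assumes n: "n > 0"
  shows "(\<Sum>d | d dvd n. mu d) = (if n = 1 then 1 else 0)"
proof (cases "n = 1")
  case True
  then show ?thesis by (simp add: mu_def)
next
  case False
  then obtain p where p: "prime p" "p dvd n" using prime_factor_nat by blast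
  define m where "m = n div p"
  have nm: "n = p * m" using p by (simp add: m_def)
  have m: "m > 0" using n nm by auto
  define D1 where "D1 = {d. d dvd n \<and> \<not> p dvd d}"
  define D2 where "D2 = {d. d dvd n \<and> p dvd d}"
  have fin: "finite {d. d dvd n}" using n by simp
  have split: "{d. d dvd n} = D1 \<union> D2" "D1 \<inter> D2 = {}" by (auto simp: D1_def D2_def)
  have f1: "finite D1" "finite D2" using fin by (auto simp: D1_def D2_def)
  have D2im: "D2 = (\<lambda>e. p * e) ` {e. e dvd m}"
  proof
    show "D2 \<subseteq> (\<lambda>e. p * e) ` {e. e dvd m}"
    proof
      fix d assume "d \<in> D2"
      then obtain e where "d = p * e" "d dvd n" by (auto simp: D2_def dvd_def)
      then have "e dvd m" using p nm by (auto simp: prime_gt_0_nat)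
      then show "d \<in> (\<lambda>e. p * e) ` {e. e dvd m}" using \<open>d = p * e\<close> by auto
    qed
    show "(\<lambda>e. p * e) ` {e. e dvd m} \<subseteq> D2" using nm by (auto simp: D2_def)
  qed
  have inj: "inj_on (\<lambda>e. p * e) {e. e dvd m}" using p by (auto simp: inj_on_def prime_gt_0_nat)
  have "(\<Sum>d\<in>D2. mu d) = (\<Sum>e | e dvd m. mu (p * e))"
    unfolding D2im by (subst sum.reindex[OF inj]) simp
  also have "\<dots> = (\<Sum>e | e dvd m. if p dvd e then 0 else - mu e)"
    using m by (intro sum.cong refl) (auto simp: mu_mult_prime mu_mult_prime_dvd p(1) intro!: mu_mult_prime dest: dvd_imp_le)
  also have "\<dots> = (\<Sum>e\<in>{e. e dvd m}. if \<not> p dvd e then - mu e else 0)"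
    by (intro sum.cong) auto
  also have "\<dots> = (\<Sum>e\<in>{e \<in> {e. e dvd m}. \<not> p dvd e}. - mu e)"
    by (rule sum.inter_filter[symmetric]) (use m in auto)
  also have "{e \<in> {e. e dvd m}. \<not> p dvd e} = {e. e dvd m \<and> \<not> p dvd e}" by auto
  also have "{e. e dvd m \<and> \<not> p dvd e} = D1"
  proof
    show "{e. e dvd m \<and> \<not> p dvd e} \<subseteq> D1" using nm by (auto simp: D1_def)
    show "D1 \<subseteq> {e. e dvd m \<and> \<not> p dvd e}"
    proof
      fix d assume d: "d \<in> D1"
      then have "coprime d p" using p by (metis D1_def mem_Collect_eq prime_imp_coprime coprime_commute)
      then have "d dvd m" using d nm by (auto simp: D1_def coprime_dvd_mult_right_iff)
      then show "d \<in> {e. e dvd m \<and> \<not> p dvd e}" using d by (auto simp: D1_def)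
    qed
  qed
  finally have "(\<Sum>d\<in>D2. mu d) = - (\<Sum>d\<in>D1. mu d)" by (simp add: sum_negf)
  then have "(\<Sum>d | d dvd n. mu d) = 0"
    by (simp add: split sum.union_disjoint f1)
  then show ?thesis using False by simp
qed

lemma dvd_sum_swap:
  fixes g h :: "nat \<Rightarrow> 'a :: comm_semiring_1"
  assumes k: "k > 0"
  shows "(\<Sum>q | q dvd k. \<Sum>d | d dvd q. g d * h (q div d))
       = (\<Sum>e | e dvd k. h e * (\<Sum>d | d dvd (k div e). g d))"
proof -
  have "(\<Sum>q | q dvd k. \<Sum>d | d dvd q. g d * h (q div d))
      = (\<Sum>(q,d) \<in> (SIGMA q:{q. q dvd k}. {d. d dvd q}). g d * h (q div d))"
    using k by (subst sum.Sigma) (auto intro: finite_divisors_nat dest: dvd_imp_le)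
  also have "\<dots> = (\<Sum>(e,d) \<in> (SIGMA e:{e. e dvd k}. {d. d dvd (k div e)}). h e * g d)"
  proof (rule sum.reindex_bij_witness[where i = "\<lambda>(e,d). (e*d, d)" and j = "\<lambda>(q,d). (q div d, d)"])
    fix a assume a: "a \<in> (SIGMA q:{q. q dvd k}. {d. d dvd q})"
    then obtain q d where qd: "a = (q,d)" "q dvd k" "d dvd q" by auto
    have q0: "q > 0" using qd k by (auto intro: Nat.gr0I)
    show "(case case a of (q, d) \<Rightarrow> (q div d, d) of (e, d) \<Rightarrow> (e * d, d)) = a"
      using qd by auto
    show "(case a of (q, d) \<Rightarrow> (q div d, d)) \<in> (SIGMA e:{e. e dvd k}. {d. d dvd k div e})"
    proof -
      obtain t where t: "k = q * t" using qd by (auto simp: dvd_def)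
      obtain u where u: "q = d * u" using qd by (auto simp: dvd_def)
      have d0: "d > 0" "u > 0" using q0 u by auto
      have "k div u = d * t" using t u d0 by simp
      then show ?thesis using qd t u d0 by (auto simp: dvd_def)
    qed
    show "(case case a of (q, d) \<Rightarrow> (q div d, d) of (e, d) \<Rightarrow> h e * g d) = (case a of (q, d) \<Rightarrow> g d * h (q div d))"
      using qd by (simp add: mult.commute)
  next
    fix b assume b: "b \<in> (SIGMA e:{e. e dvd k}. {d. d dvd (k div e)})"
    then obtain e d where ed: "b = (e,d)" "e dvd k" "d dvd k div e" by auto
    have e0: "e > 0" using ed k by (auto intro: Nat.gr0I)
    obtain t where t: "k div e = d * t" using ed by (auto simp: dvd_def)
    have kk: "k = e * d * t" using t ed by (metis dvd_mult_div_cancel mult.assoc)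
    have d0: "d > 0" using kk k by auto
    show "(case case b of (e, d) \<Rightarrow> (e * d, d) of (q, d) \<Rightarrow> (q div d, d)) = b"
      using ed d0 by auto
    show "(case b of (e, d) \<Rightarrow> (e * d, d)) \<in> (SIGMA q:{q. q dvd k}. {d. d dvd q})"
      using ed kk by auto
  qed
  also have "\<dots> = (\<Sum>e | e dvd k. \<Sum>d | d dvd (k div e). h e * g d)"
    using k by (subst sum.Sigma) (auto intro: finite_divisors_nat dest: dvd_imp_le)
  also have "\<dots> = (\<Sum>e | e dvd k. h e * (\<Sum>d | d dvd (k div e). g d))"
    by (simp add: sum_distrib_left)
  finally show ?thesis .
qed

lemma mobius_inv:
  fixes h :: "nat \<Rightarrow> 'a :: comm_ring_1"
  assumes k: "k > 0"
  shows "(\<Sum>q | q dvd k. \<Sum>d | d dvd q. of_int (mu d) * h (q div d)) = h k"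
proof -
  have "(\<Sum>q | q dvd k. \<Sum>d | d dvd q. of_int (mu d) * h (q div d))
      = (\<Sum>e | e dvd k. h e * (\<Sum>d | d dvd (k div e). of_int (mu d)))"
    by (rule dvd_sum_swap[OF k])
  also have "\<dots> = (\<Sum>e | e dvd k. if e = k then h e else 0)"
  proof (intro sum.cong refl)
    fix e assume e: "e \<in> {e. e dvd k}"
    have kd: "k div e > 0" using e k by (auto simp: dvd_div_eq_0_iff)
    have "(\<Sum>d | d dvd (k div e). (of_int (mu d) :: 'a)) = of_int (\<Sum>d | d dvd (k div e). mu d)"
      by simp
    also have "\<dots> = (if k div e = 1 then 1 else 0)" using mu_sum[OF kd] by simp
    moreover have "k div e = 1 \<longleftrightarrow> e = k"
    proof -
      obtain t where t: "k = e * t" using e by (auto simp: dvd_def)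
      have "e > 0" "t > 0" using t k by auto
      then show ?thesis using t by auto
    qed
    ultimately show "h e * (\<Sum>d | d dvd (k div e). of_int (mu d)) = (if e = k then h e else 0)"
      by auto
  qed
  also have "\<dots> = h k" using k by (simp add: sum.delta)
  finally show ?thesis .
qed

lemma sqf_mult_char:
  fixes a :: nat
  assumes "a > 0" "squarefree a" "prime p"
  shows "multiplicity p a = (if p \<in> prime_factors a then 1 else 0)"
proof -
  have "multiplicity p a \<le> 1" using assms squarefree_factorial_semiring''[of a] by auto
  moreover have "p \<in> prime_factors a \<longleftrightarrow> multiplicity p a > 0"
    using assms(3) by (simp add: prime_factors_multiplicity)
  ultimately show ?thesis by auto
qed

lemma sqf_inj:
  fixes a b :: nat
  assumes "a > 0" "b > 0" "squarefree a" "squarefree b" "prime_factors a = prime_factors b"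
  shows "a = b"
  by (rule multiplicity_eq_nat) (use assms sqf_mult_char in auto)

lemma abs_mu_sum_le:
  fixes n :: nat
  assumes n: "n > 0"
  shows "(\<Sum>d | d dvd n. \<bar>mu d\<bar>) \<le> 2 ^ omega n"
proof -
  have fin: "finite {d. d dvd n}" using n by simp
  have "(\<Sum>d | d dvd n. \<bar>mu d\<bar>) = (\<Sum>d \<in> {d. d dvd n}. if squarefree d then 1 else 0)"
    using n by (intro sum.cong refl) (auto simp: mu_def abs_mult)
  also have "\<dots> = of_nat (card {d \<in> {d. d dvd n}. squarefree d})"
    using fin by (simp add: sum.If_cases Int_def)
  also have "card {d \<in> {d. d dvd n}. squarefree d} \<le> card (Pow (prime_factors n))"
  proof (rule card_inj_on_le[where f = prime_factors])
    show "inj_on prime_factors {d \<in> {d. d dvd n}. squarefree d}"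
      unfolding inj_on_def using n by (auto intro!: sqf_inj intro: Nat.gr0I)
    show "prime_factors ` {d \<in> {d. d dvd n}. squarefree d} \<subseteq> Pow (prime_factors n)"
      using n by (auto simp: in_prime_factors_iff intro: dvd_trans)
  qed simp
  also have "card (Pow (prime_factors n)) = 2 ^ omega n" by (simp add: card_Pow omega_def)
  finally show ?thesis by simp
qed

lemma omega_mono:
  fixes m k :: nat
  assumes "m dvd k" "k > 0"
  shows "omega m \<le> omega k"
  unfolding omega_def
  by (rule card_mono) (use assms in \<open>auto simp: in_prime_factors_iff intro: dvd_trans\<close>)

lemma lcm_power_nat:
  fixes a b :: nat
  assumes "a > 0" "b > 0"
  shows "lcm a b ^ s = lcm (a ^ s) (b ^ s)"
proof -
  have g: "gcd a b > 0" using assms by simp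
  have "gcd a b ^ s * lcm a b ^ s = (a * b) ^ s"
    by (subst prod_gcd_lcm_nat[of a b]) (rule power_mult_distrib[symmetric])
  also have "\<dots> = a^s * b^s" by (rule power_mult_distrib)
  also have "\<dots> = gcd (a^s) (b^s) * lcm (a^s) (b^s)"
    by (rule prod_gcd_lcm_nat)
  also have "gcd (a^s) (b^s) = gcd a b ^ s" by simp
  finally show ?thesis using g assms by auto
qed

lemma gen_gcd_eq_1_iff:
  assumes s: "s > 0" and h: "h > 0" and q: "q > 0"
  shows "gen_gcd s h (q^s) = 1 \<longleftrightarrow> (\<forall>d. d dvd q \<and> d^s dvd h \<longrightarrow> d = 1)"
proof -
  define P where "P = (\<lambda>x. \<exists>d. x = d ^ s \<and> d ^ s dvd h \<and> d ^ s dvd q ^ s)"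
  have G: "gen_gcd s h (q^s) = Greatest P" by (simp add: gen_gcd_def P_def)
  have P1: "P 1" by (auto simp: P_def intro!: exI[of _ 1])
  have bound: "\<And>y. P y \<Longrightarrow> y \<le> h" using h by (auto simp: P_def dest: dvd_imp_le)
  show ?thesis
  proof
    assume g1: "gen_gcd s h (q^s) = 1"
    show "\<forall>d. d dvd q \<and> d^s dvd h \<longrightarrow> d = 1"
    proof (intro allI impI)
      fix d assume d: "d dvd q \<and> d^s dvd h"
      then have "P (d^s)" by (auto simp: P_def intro!: exI[of _ d] dvd_power_same)
      then have "d^s \<le> 1" using Greatest_le_nat[of P "d^s" h] bound g1 G by auto
      moreover have "d > 0" using d q by (auto intro: Nat.gr0I)
      moreover have "d \<le> d^s" using \<open>d > 0\<close> s by (simp add: self_le_power)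
      ultimately show "d = 1" by linarith
    qed
  next
    assume A: "\<forall>d. d dvd q \<and> d^s dvd h \<longrightarrow> d = 1"
    have "P (Greatest P)" using GreatestI_nat[of P 1 h] P1 bound by auto
    then obtain d where "Greatest P = d^s" "d^s dvd h" "d^s dvd q^s" by (auto simp: P_def)
    moreover then have "d dvd q" using s by simp
    ultimately show "gen_gcd s h (q^s) = 1" using A G by auto
  qed
qed

lemma div_set_max:
  fixes q h s :: nat
  assumes s: "s > 0" and h: "h > 0" and q: "q > 0"
  shows "\<exists>L>0. {d. d dvd q \<and> d^s dvd h} = {d. d dvd L}"
proof -
  define D where "D = {d. d dvd q \<and> d^s dvd h}"
  have fin: "finite D" using q by (auto simp: D_def)
  have one: "1 \<in> D" by (simp add: D_def)
  define L where "L = Max D"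
  have LD: "L \<in> D" using fin one unfolding L_def by (intro Max_in) auto
  have L0: "L > 0" using LD q by (auto simp: D_def intro: Nat.gr0I)
  have "D = {d. d dvd L}"
  proof
    show "D \<subseteq> {d. d dvd L}"
    proof
      fix d assume d: "d \<in> D"
      have d0: "d > 0" using d q by (auto simp: D_def intro: Nat.gr0I)
      have "lcm d L \<in> D"
      proof -
        have "lcm d L dvd q" using d LD by (auto simp: D_def)
        moreover have "lcm d L ^ s dvd h"
          using d LD d0 L0 by (auto simp: D_def lcm_power_nat)
        ultimately show ?thesis by (simp add: D_def)
      qed
      then have "lcm d L \<le> L" using fin by (simp add: L_def)
      moreover have "L \<le> lcm d L" using d0 L0 by (simp add: dvd_imp_le lcm_pos_nat)
      ultimately have "lcm d L = L" by simp
      then show "d \<in> {d. d dvd L}" by (metis dvd_lcm1 mem_Collect_eq)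
    qed
    show "{d. d dvd L} \<subseteq> D"
      using LD by (auto simp: D_def intro: dvd_trans dvd_power_same)
  qed
  then show ?thesis using L0 by (auto simp: D_def)
qed

lemma gen_gcd_indicator:
  assumes s: "s > 0" and h: "h > 0" and q: "q > 0"
  shows "(if gen_gcd s h (q^s) = 1 then 1 else 0 :: complex)
       = (\<Sum>d | d dvd q \<and> d^s dvd h. of_int (mu d))"
proof -
  obtain L where L: "L > 0" "{d. d dvd q \<and> d^s dvd h} = {d. d dvd L}"
    using div_set_max[OF s h q] by blast
  have "(\<Sum>d | d dvd q \<and> d^s dvd h. (of_int (mu d) :: complex)) = of_int (\<Sum>d | d dvd L. mu d)"
    by (simp add: L(2))
  also have "\<dots> = (if L = 1 then 1 else 0)" by (simp add: mu_sum[OF L(1)])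
  also have "L = 1 \<longleftrightarrow> gen_gcd s h (q^s) = 1"
  proof -
    have "gen_gcd s h (q^s) = 1 \<longleftrightarrow> (\<forall>d. d dvd L \<longrightarrow> d = 1)"
      using gen_gcd_eq_1_iff[OF s h q] L(2) unfolding set_eq_iff mem_Collect_eq by blast
    also have "\<dots> \<longleftrightarrow> L = 1" by auto
    finally show ?thesis by simp
  qed
  finally show ?thesis by simp
qed

lemma root_sum:
  fixes M N :: nat
  assumes M: "M > 0"
  shows "(\<Sum>j\<in>{1..M}. exp (2 * of_real pi * \<i> * of_nat N * of_nat j / of_nat M))
       = (if M dvd N then of_nat M else 0)"
proof -
  define z where "z = exp (2 * of_real pi * \<i> * of_nat N / of_nat M)"
  have trm: "exp (2 * of_real pi * \<i> * of_nat N * of_nat j / of_nat M) = z ^ j" for j :: nat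
  proof -
    have "2 * of_real pi * \<i> * of_nat N * of_nat j / of_nat M
        = of_nat j * (2 * of_real pi * \<i> * of_nat N / of_nat M)" by simp
    then show ?thesis unfolding z_def exp_of_nat_mult[symmetric] by metis
  qed
  have z1: "z = 1 \<longleftrightarrow> M dvd N" using complex_root_unity_eq_1[of M N] M by (simp add: z_def)
  have zM: "z ^ M = 1" using complex_root_unity[of M N] M by (simp add: z_def)
  have "(\<Sum>j\<in>{1..M}. exp (2 * of_real pi * \<i> * of_nat N * of_nat j / of_nat M)) = (\<Sum>j\<in>{1..M}. z ^ j)"
    by (simp add: trm)
  also have "\<dots> = (\<Sum>j<M. z ^ Suc j)"
    using sum.atLeast1_atMost_eq[of "\<lambda>j. z ^ j" M] by simp
  also have "\<dots> = z * (\<Sum>j<M. z ^ j)" by (simp add: sum_distrib_left)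
  also have "\<dots> = (if M dvd N then of_nat M else 0)"
  proof (cases "M dvd N")
    case True
    then show ?thesis using z1 by simp
  next
    case False
    then have "z \<noteq> 1" using z1 by simp
    then have "(\<Sum>j<M. z ^ j) = (z ^ M - 1) / (z - 1)" by (rule geometric_sum)
    then show ?thesis using False zM by simp
  qed
  finally show ?thesis .
qed

lemma inner_sum:
  fixes s q d N :: nat
  assumes s: "s > 0" and q: "q > 0" and d: "d dvd q"
  shows "(\<Sum>h\<in>{h \<in> {1..q^s}. d^s dvd h}. exp (2 * of_real pi * \<i> * of_nat N * of_nat h / of_nat (q ^ s)))
       = (if (q div d)^s dvd N then of_nat ((q div d)^s) else 0)"
proof -
  define M where "M = (q div d)^s"
  define c where "c = d^s"
  have d0: "d > 0" using d q by (auto intro: Nat.gr0I)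
  have c0: "c > 0" using d0 by (simp add: c_def)
  have M0: "M > 0" using d q d0 by (auto simp: M_def dest: dvd_imp_le intro: Nat.gr0I simp: div_greater_zero_iff)
  have qs: "q^s = c * M" using d by (simp add: c_def M_def power_mult_distrib[symmetric])
  have img: "{h \<in> {1..q^s}. d^s dvd h} = (\<lambda>j. c * j) ` {1..M}"
  proof
    show "{h \<in> {1..q^s}. d^s dvd h} \<subseteq> (\<lambda>j. c * j) ` {1..M}"
    proof
      fix h assume h: "h \<in> {h \<in> {1..q^s}. d^s dvd h}"
      then obtain j where j: "h = c * j" by (auto simp: c_def dvd_def)
      have "j \<ge> 1" using h j by (auto intro: Nat.gr0I)
      moreover have "j \<le> M" using h j qs c0 by auto
      ultimately show "h \<in> (\<lambda>j. c * j) ` {1..M}" using j by auto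
    qed
    show "(\<lambda>j. c * j) ` {1..M} \<subseteq> {h \<in> {1..q^s}. d^s dvd h}"
      using qs c0 by (auto simp: c_def)
  qed
  have inj: "inj_on (\<lambda>j. c * j) {1..M}" using c0 by (auto simp: inj_on_def)
  have "(\<Sum>h\<in>{h \<in> {1..q^s}. d^s dvd h}. exp (2 * of_real pi * \<i> * of_nat N * of_nat h / of_nat (q ^ s)))
      = (\<Sum>j\<in>{1..M}. exp (2 * of_real pi * \<i> * of_nat N * of_nat (c * j) / of_nat (c * M)))"
    unfolding img by (subst sum.reindex[OF inj]) (simp add: qs)
  also have "\<dots> = (\<Sum>j\<in>{1..M}. exp (2 * of_real pi * \<i> * of_nat N * of_nat j / of_nat M))"
  proof (intro sum.cong refl)
    fix j
    have "(2 * of_real pi * \<i> * of_nat N * of_nat (c * j) / of_nat (c * M) :: complex)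
        = 2 * of_real pi * \<i> * of_nat N * of_nat j / of_nat M"
      using c0 by (simp add: field_simps)
    then show "exp (2 * of_real pi * \<i> * of_nat N * of_nat (c * j) / of_nat (c * M))
        = exp (2 * of_real pi * \<i> * of_nat N * of_nat j / of_nat M)" by simp
  qed
  also have "\<dots> = (if M dvd N then of_nat M else 0)" by (rule root_sum[OF M0])
  finally show ?thesis by (simp add: M_def)
qed

lemma cr_formula:
  fixes s q N :: nat
  assumes s: "s > 0" and q: "q > 0"
  shows "cohen_ramanujan s q N =
    (\<Sum>d | d dvd q. of_int (mu d) * (if (q div d)^s dvd N then of_nat ((q div d)^s) else 0))"
proof -
  define e where "e = (\<lambda>h::nat. exp (2 * of_real pi * \<i> * of_nat N * of_nat h / of_nat (q ^ s)) :: complex)"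
  define Dq where "Dq = {d. d dvd q}"
  have finD: "finite Dq" using q by (simp add: Dq_def)
  have "cohen_ramanujan s q N = (\<Sum>h\<in>{h\<in>{1..q ^ s}. gen_gcd s h (q ^ s) = 1}. e h)"
    by (simp add: cohen_ramanujan_def e_def)
  also have "\<dots> = (\<Sum>h\<in>{1..q^s}. if gen_gcd s h (q ^ s) = 1 then e h else 0)"
    by (rule sum.inter_filter) simp
  also have "\<dots> = (\<Sum>h\<in>{1..q^s}. (if gen_gcd s h (q ^ s) = 1 then 1 else 0) * e h)"
    by (intro sum.cong) auto
  also have "\<dots> = (\<Sum>h\<in>{1..q^s}. (\<Sum>d \<in> {d. d \<in> Dq \<and> d^s dvd h}. of_int (mu d)) * e h)"
    by (intro sum.cong refl, subst gen_gcd_indicator[OF s _ q]) (auto simp: Dq_def)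
  also have "\<dots> = (\<Sum>h\<in>{1..q^s}. \<Sum>d \<in> {d. d \<in> Dq \<and> d^s dvd h}. of_int (mu d) * e h)"
    by (simp add: sum_distrib_right)
  also have "\<dots> = (\<Sum>d\<in>Dq. \<Sum>h \<in> {h. h \<in> {1..q^s} \<and> d^s dvd h}. of_int (mu d) * e h)"
    by (rule sum.swap_restrict) (use finD in auto)
  also have "\<dots> = (\<Sum>d\<in>Dq. of_int (mu d) * (\<Sum>h \<in> {h \<in> {1..q^s}. d^s dvd h}. e h))"
    by (simp add: sum_distrib_left)
  also have "\<dots> = (\<Sum>d\<in>Dq. of_int (mu d) * (if (q div d)^s dvd N then of_nat ((q div d)^s) else 0))"
    by (intro sum.cong refl, unfold e_def, subst inner_sum[OF s q]) (auto simp: Dq_def)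
  finally show ?thesis by (simp add: Dq_def)
qed

lemma cr_formula_pow:
  fixes s q n :: nat
  assumes s: "s > 0" and q: "q > 0"
  shows "cohen_ramanujan s q (n^s) =
    (\<Sum>d | d dvd q. of_int (mu d) * (if (q div d) dvd n then of_nat ((q div d)^s) else 0))"
  using cr_formula[OF s q, of "n^s"] s by simp

lemma Suc_image_UNIV: "Suc ` UNIV = {1::nat..}"
proof -
  have "x \<in> Suc ` UNIV" if "x \<ge> 1" for x :: nat
  proof -
    have "x = Suc (x - 1)" using that by simp
    then show ?thesis by (rule image_eqI) simp
  qed
  then show ?thesis by auto
qed

lemma from1:
  fixes u :: "nat \<Rightarrow> 'a :: banach"
  assumes "(\<lambda>m. norm (u m)) summable_on {1..}"
  shows "summable (\<lambda>m. norm (u (Suc m)))" "(\<lambda>m. u (Suc m)) sums infsum u {1..}"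
proof -
  have "(\<lambda>m. norm (u m)) summable_on (Suc ` UNIV)" using assms by (simp add: Suc_image_UNIV)
  then have "((\<lambda>m. norm (u m)) \<circ> Suc) summable_on UNIV" by (subst (asm) summable_on_reindex) auto
  then show sn: "summable (\<lambda>m. norm (u (Suc m)))" by (auto dest: summable_on_imp_summable simp: o_def)
  then have "summable (\<lambda>m. u (Suc m))" by (rule summable_norm_cancel)
  then have "((\<lambda>m. u (Suc m)) has_sum (\<Sum>m. u (Suc m))) UNIV"
    by (intro norm_summable_imp_has_sum[OF sn]) (simp add: summable_sums)
  then have "(u has_sum (\<Sum>m. u (Suc m))) (Suc ` UNIV)"
    by (subst has_sum_reindex) (auto simp: o_def)
  then have "infsum u {1..} = (\<Sum>m. u (Suc m))" by (simp add: Suc_image_UNIV infsumI)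
  then show "(\<lambda>m. u (Suc m)) sums infsum u {1..}"
    using \<open>summable (\<lambda>m. u (Suc m))\<close> by (simp add: summable_sums)
qed

lemma summable_on_from_Suc:
  fixes v :: "nat \<Rightarrow> real"
  assumes "summable (\<lambda>k. v (Suc k))" "\<And>k. v k \<ge> 0"
  shows "v summable_on {1..}"
proof -
  have "(v \<circ> Suc) summable_on UNIV"
    using assms by (intro summable_nonneg_imp_summable_on) (auto simp: o_def)
  then have "v summable_on (Suc ` UNIV)" by (subst summable_on_reindex) auto
  then show ?thesis by (simp add: Suc_image_UNIV)
qed

lemma cr_sum_eval:
  fixes s k n :: nat
  assumes s: "s > 0" and k: "k > 0"
  shows "(\<Sum>q | q dvd k. cohen_ramanujan s q (n^s)) = (if k dvd n then of_nat (k^s) else 0)"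
proof -
  have "(\<Sum>q | q dvd k. cohen_ramanujan s q (n^s))
      = (\<Sum>q | q dvd k. \<Sum>d | d dvd q. of_int (mu d) * (if (q div d) dvd n then of_nat ((q div d)^s) else (0::complex)))"
    using k by (intro sum.cong refl cr_formula_pow[OF s]) (auto intro: Nat.gr0I)
  also have "\<dots> = (if k dvd n then of_nat (k^s) else 0)"
    by (rule mobius_inv[OF k, where h = "\<lambda>e. if e dvd n then of_nat (e^s) else (0::complex)"])
  finally show ?thesis .
qed

lemma cr_sum_bound:
  fixes s k n :: nat
  assumes s: "s > 0" and k: "k > 0" and n: "n > 0"
  shows "(\<Sum>q | q dvd k. norm (cohen_ramanujan s q (n^s))) \<le> (\<Sum>e | e dvd n. real (e^s)) * 2 ^ omega k"
proof -
  define H where "H = (\<lambda>e. if e dvd n then real (e^s) else 0)"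
  have H0: "H e \<ge> 0" for e by (simp add: H_def)
  have "(\<Sum>q | q dvd k. norm (cohen_ramanujan s q (n^s)))
      \<le> (\<Sum>q | q dvd k. \<Sum>d | d dvd q. of_int \<bar>mu d\<bar> * H (q div d))"
  proof (rule sum_mono)
    fix q assume q: "q \<in> {q. q dvd k}"
    then have q0: "q > 0" using k by (auto intro: Nat.gr0I)
    have "norm (cohen_ramanujan s q (n^s))
       = norm (\<Sum>d | d dvd q. of_int (mu d) * (if (q div d) dvd n then of_nat ((q div d)^s) else (0::complex)))"
      by (simp add: cr_formula_pow[OF s q0])
    also have "\<dots> \<le> (\<Sum>d | d dvd q. norm (of_int (mu d) * (if (q div d) dvd n then of_nat ((q div d)^s) else (0::complex))))"
      by (rule norm_sum)
    also have "\<dots> = (\<Sum>d | d dvd q. of_int \<bar>mu d\<bar> * H (q div d))"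
      by (intro sum.cong refl) (auto simp: H_def norm_mult norm_power)
    finally show "norm (cohen_ramanujan s q (n^s)) \<le> (\<Sum>d | d dvd q. of_int \<bar>mu d\<bar> * H (q div d))" .
  qed
  also have "\<dots> = (\<Sum>e | e dvd k. H e * (\<Sum>d | d dvd (k div e). of_int \<bar>mu d\<bar>))"
    by (rule dvd_sum_swap[OF k])
  also have "\<dots> \<le> (\<Sum>e | e dvd k. H e * 2 ^ omega k)"
  proof (rule sum_mono)
    fix e assume e: "e \<in> {e. e dvd k}"
    have ke: "k div e > 0" using e k by (auto simp: dvd_div_eq_0_iff)
    have "(\<Sum>d | d dvd (k div e). real_of_int \<bar>mu d\<bar>) = of_int (\<Sum>d | d dvd (k div e). \<bar>mu d\<bar>)"
      by simp
    also have "\<dots> \<le> of_int (2 ^ omega (k div e))"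
      using abs_mu_sum_le[OF ke] by linarith
    also have "\<dots> \<le> 2 ^ omega k"
      using omega_mono[of "k div e" k] k e
      by (simp, metis mem_Collect_eq dvd_mult_div_cancel dvd_triv_right)
    finally show "H e * (\<Sum>d | d dvd (k div e). real_of_int \<bar>mu d\<bar>) \<le> H e * 2 ^ omega k"
      by (intro mult_left_mono H0)
  qed
  also have "\<dots> = (\<Sum>e | e dvd k. H e) * 2 ^ omega k" by (simp add: sum_distrib_right)
  also have "(\<Sum>e | e dvd k. H e) \<le> (\<Sum>e | e dvd n. real (e^s))"
  proof -
    have "(\<Sum>e | e dvd k. H e) = (\<Sum>e\<in>{e \<in> {e. e dvd k}. e dvd n}. real (e^s))"
      unfolding H_def by (rule sum.inter_filter[symmetric]) (use k in simp)
    also have "\<dots> \<le> (\<Sum>e | e dvd n. real (e^s))"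
      by (rule sum_mono2) (use n in auto)
    finally show ?thesis .
  qed
  then have "(\<Sum>e | e dvd k. H e) * 2 ^ omega k \<le> (\<Sum>e | e dvd n. real (e^s)) * 2 ^ omega k"
    by (intro mult_right_mono) auto
  finally show ?thesis .
qed

theorem theorem2:
  fixes s :: nat and f :: "nat \<Rightarrow> complex"
  assumes s_pos: "s > 0"
    and conv: "summable (\<lambda>k. 2 ^ omega (Suc k) * norm (mu_conv f (Suc k)) / real (Suc k) ^ s)"
  defines "a \<equiv> (\<lambda>q. \<Sum>m. mu_conv f (Suc m * q) / of_nat (Suc m * q) ^ s)"
  shows "\<forall>n>0.
      (\<lambda>(q, m). norm (mu_conv f (m * q)) / real (m * q) ^ s
                 * norm (cohen_ramanujan s q (n ^ s))) summable_on ({1..} \<times> {1..})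
    \<and> summable (\<lambda>q. norm (a (Suc q) * cohen_ramanujan s (Suc q) (n ^ s)))
    \<and> (\<lambda>q. a (Suc q) * cohen_ramanujan s (Suc q) (n ^ s)) sums f n"
proof (intro allI impI)
  fix n :: nat assume n: "n > 0"
  define b where "b = (\<lambda>k. norm (mu_conv f k) / real k ^ s)"
  define C where "C = (\<Sum>e | e dvd n. real (e^s))"
  define A where "A = ({1..} \<times> {1..} :: (nat \<times> nat) set)"
  define B where "B = (SIGMA k:{1::nat..}. {q. q dvd k})"
  define R where "R = (\<lambda>(q, m). norm (mu_conv f (m * q)) / real (m * q) ^ s
                 * norm (cohen_ramanujan s q (n ^ s)))"
  define G where "G = (\<lambda>(q,m). mu_conv f (m*q) / of_nat (m*q) ^ s * cohen_ramanujan s q (n ^ s))"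
  define G' where "G' = (\<lambda>(k,q). mu_conv f k / of_nat k ^ s * cohen_ramanujan s q (n ^ s))"
  define i where "i = (\<lambda>(k::nat,q::nat). (q, k div q))"
  define j where "j = (\<lambda>(q::nat,m::nat). (m*q, q))"
  have b0: "b k \<ge> 0" for k by (simp add: b_def)
  have C0: "C \<ge> 0" by (simp add: C_def sum_nonneg)

  have bij1: "i (j x) = x" if "x \<in> A" for x
    using that by (auto simp: A_def i_def j_def)
  have bij2: "j x \<in> B" if "x \<in> A" for x
    using that by (auto simp: A_def B_def j_def)
  have bij3: "j (i y) = y" if "y \<in> B" for y
    using that by (auto simp: B_def i_def j_def)
  have bij4: "i y \<in> A" if yB: "y \<in> B" for y
  proof -
    obtain k q where y: "y = (k,q)" "k \<ge> 1" "q dvd k" using yB by (cases y) (auto simp: B_def)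
    then have "q \<ge> 1" "k div q \<ge> 1"
      by (auto intro: Nat.gr0I simp: Suc_le_eq dvd_div_eq_0_iff)
    then show ?thesis using y by (simp add: A_def i_def)
  qed

  have b_sum: "(\<lambda>k. 2 ^ omega k * b k) summable_on {1..}"
    by (rule summable_on_from_Suc) (use conv in \<open>auto simp: b_def\<close>)
  have b_sum1: "b summable_on {1..}"
  proof (rule summable_on_comparison_test[OF b_sum])
    fix k :: nat
    have "(1::real) \<le> 2 ^ omega k" by simp
    then show "b k \<le> 2 ^ omega k * b k" using b0[of k] by (simp add: mult_le_cancel_right1)
  qed (simp add: b0)

  have Bsum: "(\<lambda>(k,q). b k * norm (cohen_ramanujan s q (n ^ s))) summable_on B"
    unfolding B_def
  proof (rule summable_on_SigmaI[where g = "\<lambda>k. b k * (\<Sum>q | q dvd k. norm (cohen_ramanujan s q (n ^ s)))"])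
    fix k :: nat assume k: "k \<in> {1..}"
    then have "finite {q. q dvd k}" by simp
    then show "((\<lambda>q. (\<lambda>(k,q). b k * norm (cohen_ramanujan s q (n ^ s))) (k,q))
        has_sum (b k * (\<Sum>q | q dvd k. norm (cohen_ramanujan s q (n ^ s))))) {q. q dvd k}"
      by (simp add: sum_distrib_left)
  next
    show "(\<lambda>k. b k * (\<Sum>q | q dvd k. norm (cohen_ramanujan s q (n ^ s)))) summable_on {1..}"
    proof (rule summable_on_comparison_test)
      show "(\<lambda>k. C * (2 ^ omega k * b k)) summable_on {1..}"
        by (rule summable_on_cmult_right[OF b_sum])
      fix k :: nat assume k: "k \<in> {1..}"
      have "(\<Sum>q | q dvd k. norm (cohen_ramanujan s q (n ^ s))) \<le> C * 2 ^ omega k"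
        using cr_sum_bound[OF s_pos _ n, of k] k by (simp add: C_def)
      then have "b k * (\<Sum>q | q dvd k. norm (cohen_ramanujan s q (n ^ s))) \<le> b k * (C * 2 ^ omega k)"
        by (intro mult_left_mono b0)
      then show "b k * (\<Sum>q | q dvd k. norm (cohen_ramanujan s q (n ^ s))) \<le> C * (2 ^ omega k * b k)"
        by (simp add: algebra_simps)
      show "0 \<le> b k * (\<Sum>q | q dvd k. norm (cohen_ramanujan s q (n ^ s)))"
        by (intro mult_nonneg_nonneg b0 sum_nonneg) auto
    qed
  qed (auto simp: b0)

  have goal1: "R summable_on A"
  proof -
    have "R summable_on A \<longleftrightarrow> (\<lambda>(k,q). b k * norm (cohen_ramanujan s q (n ^ s))) summable_on B"
      by (rule summable_on_reindex_bij_witness[of A i j B])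
         (auto simp: bij1 bij2 bij3 bij4, auto simp: A_def j_def R_def b_def)
    then show ?thesis using Bsum by simp
  qed

  have normG: "norm (G x) = R x" for x
    by (cases x) (simp add: G_def R_def norm_mult norm_divide norm_power)
  have Gsum: "G summable_on A"
    by (rule abs_summable_summable) (simp add: normG goal1)
  have GG': "(G has_sum infsum G A) A \<longleftrightarrow> (G' has_sum infsum G A) B"
    by (rule has_sum_reindex_bij_witness[of A i j B])
       (auto simp: bij1 bij2 bij3 bij4, auto simp: A_def j_def G_def G'_def)
  have G'has: "(G' has_sum infsum G A) B" using GG' Gsum by simp

  have G'val: "infsum G' B = f n"
  proof -
    have G'sum: "G' summable_on B" using G'has by (rule has_sum_imp_summable)
    have "infsum G' B = (\<Sum>\<^sub>\<infinity>k\<in>{1..}. \<Sum>\<^sub>\<infinity>q\<in>{q. q dvd k}. G' (k,q))"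
      unfolding B_def by (rule infsum_Sigma_banach[symmetric]) (use G'sum in \<open>simp add: B_def\<close>)
    also have "\<dots> = (\<Sum>\<^sub>\<infinity>k\<in>{1..}. if k dvd n then mu_conv f k else 0)"
    proof (rule infsum_cong)
      fix k :: nat assume k: "k \<in> {1..}"
      then have k0: "k > 0" by simp
      have "(\<Sum>\<^sub>\<infinity>q\<in>{q. q dvd k}. G' (k,q)) = (\<Sum>q | q dvd k. G' (k,q))"
        using k0 by (simp add: infsum_finite)
      also have "\<dots> = mu_conv f k / of_nat k ^ s * (\<Sum>q | q dvd k. cohen_ramanujan s q (n ^ s))"
        by (simp add: G'_def sum_distrib_left)
      also have "\<dots> = (if k dvd n then mu_conv f k else 0)"
        using k0 by (simp add: cr_sum_eval[OF s_pos k0])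
      finally show "(\<Sum>\<^sub>\<infinity>q\<in>{q. q dvd k}. G' (k,q)) = (if k dvd n then mu_conv f k else 0)" .
    qed
    also have "\<dots> = (\<Sum>\<^sub>\<infinity>k\<in>{k. k dvd n}. mu_conv f k)"
      by (rule infsum_cong_neutral) (use n in \<open>auto intro: Nat.gr0I\<close>)
    also have "\<dots> = (\<Sum>k | k dvd n. mu_conv f k)"
      using n by simp
    also have "\<dots> = f n"
      unfolding mu_conv_def by (rule mobius_inv[OF n])
    finally show ?thesis .
  qed

  define w where "w = (\<lambda>q. a q * cohen_ramanujan s q (n ^ s))"
  have inner: "(\<Sum>\<^sub>\<infinity>m\<in>{1..}. G (q,m)) = w q"
   and inner_abs: "(\<lambda>m. norm (G (q,m))) summable_on {1..}" if q: "q \<in> {1..}" for q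
  proof -
    have q0: "q > 0" using q by simp
    define u where "u = (\<lambda>m. mu_conv f (m*q) / of_nat (m*q) ^ s)"
    have nu: "norm (u m) = b (m*q)" for m by (simp add: u_def b_def norm_divide norm_power norm_mult)
    have "b summable_on ((\<lambda>m. m*q) ` {1..})"
      by (rule summable_on_subset[OF b_sum1]) (use q0 in auto)
    then have "(b \<circ> (\<lambda>m. m*q)) summable_on {1..}"
      by (subst (asm) summable_on_reindex) (use q0 in \<open>auto simp: inj_on_def\<close>)
    then have usum: "(\<lambda>m. norm (u m)) summable_on {1..}" by (simp add: nu o_def)
    have "(\<lambda>m. u (Suc m)) sums infsum u {1..}" by (rule from1(2)[OF usum])
    moreover have "a q = (\<Sum>m. u (Suc m))" by (simp only: a_def u_def)
    ultimately have aq: "a q = infsum u {1..}" by (simp add: sums_iff)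
    have "u summable_on {1..}" by (rule abs_summable_summable[OF usum])
    have "(\<Sum>\<^sub>\<infinity>m\<in>{1..}. G (q,m)) = (\<Sum>\<^sub>\<infinity>m\<in>{1..}. u m * cohen_ramanujan s q (n ^ s))"
      by (simp add: G_def u_def)
    also have "\<dots> = infsum u {1..} * cohen_ramanujan s q (n ^ s)"
      by (rule infsum_cmult_left) (use \<open>u summable_on {1..}\<close> in simp)
    finally show "(\<Sum>\<^sub>\<infinity>m\<in>{1..}. G (q,m)) = w q" by (simp add: w_def aq)
    have eqn: "norm (G (q,m)) = norm (u m) * norm (cohen_ramanujan s q (n ^ s))" for m
      unfolding G_def u_def by (simp only: prod.case norm_mult)
    show "(\<lambda>m. norm (G (q,m))) summable_on {1..}"
      unfolding eqn by (rule summable_on_cmult_left[OF usum])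
  qed

  have Gfub: "infsum G A = infsum w {1..}"
  proof -
    have "infsum G A = (\<Sum>\<^sub>\<infinity>q\<in>{1..}. \<Sum>\<^sub>\<infinity>m\<in>{1..}. G (q,m))"
      unfolding A_def by (rule infsum_Sigma_banach[symmetric]) (use Gsum in \<open>simp add: A_def\<close>)
    also have "\<dots> = infsum w {1..}" by (rule infsum_cong) (erule inner)
    finally show ?thesis .
  qed

  have wnorm: "(\<lambda>q. norm (w q)) summable_on {1..}"
  proof (rule summable_on_comparison_test)
    have "(\<lambda>q. \<Sum>\<^sub>\<infinity>m\<in>{1..}. R (q,m)) summable_on {1..}"
      using goal1 unfolding A_def by (rule summable_on_Sigma_banach[of "\<lambda>q m. R (q,m)", simplified])
    then show "(\<lambda>q. \<Sum>\<^sub>\<infinity>m\<in>{1..}. R (q,m)) summable_on {1..}" .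
    fix q :: nat assume q: "q \<in> {1..}"
    have "norm (w q) = norm (\<Sum>\<^sub>\<infinity>m\<in>{1..}. G (q,m))" using inner[OF q] by (simp only:)
    also have "\<dots> \<le> (\<Sum>\<^sub>\<infinity>m\<in>{1..}. norm (G (q,m)))" by (rule norm_infsum_bound[OF inner_abs[OF q]])
    finally show "norm (w q) \<le> (\<Sum>\<^sub>\<infinity>m\<in>{1..}. R (q,m))" by (simp add: normG)
  qed simp

  show "R summable_on ({1..} \<times> {1..}) \<and> summable (\<lambda>q. norm (a (Suc q) * cohen_ramanujan s (Suc q) (n ^ s)))
    \<and> (\<lambda>q. a (Suc q) * cohen_ramanujan s (Suc q) (n ^ s)) sums f n"
  proof (intro conjI)
    show "R summable_on ({1..} \<times> {1..})" using goal1 by (simp add: A_def)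
    show "summable (\<lambda>q. norm (a (Suc q) * cohen_ramanujan s (Suc q) (n ^ s)))"
      using from1(1)[OF wnorm] by (simp add: w_def)
    have "infsum w {1..} = f n" using Gfub G'has G'val by (metis infsumI)
    then show "(\<lambda>q. a (Suc q) * cohen_ramanujan s (Suc q) (n ^ s)) sums f n"
      using from1(2)[OF wnorm] by (simp add: w_def)
  qed
qed

end
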